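(* Let $\mathcal{A}$ be a $C^*$-algebra, $\mathcal{E}$ a right Hilbert $\mathcal{A}$-module, $\mathcal{F}$ a non-trivial closed submodule of $\mathcal{E}$, $\mathcal{H}_1,\mathcal{H}_2$ Hilbert spaces, and $\phi:\mathcal{A}\to\mathcal{B}(\mathcal{H}_1)$ a completely positive map. Suppose there exists a non-degenerate $\phi$-map $\Phi:\mathcal{F}\to\mathcal{B}(\mathcal{H}_1,\mathcal{H}_2)$ which has a $\phi$-map extension $\Psi:\mathcal{E}\to\mathcal{B}(\mathcal{H}_1,\mathcal{H}_2)$ (i.e. $\Psi$ is a $\phi$-map on $\mathcal{E}$ with $\Psi|_{\mathcal{F}}=\Phi$). Then: (i) $\phi(\langle z,x\rangle)=0$ for all $z\in\mathcal{F}^{\perp}$ and $x\in\mathcal{E}$; (ii) for every Hilbert space $\mathcal{K}$, every $\phi$-map $\Theta:\mathcal{F}\to\mathcal{B}(\mathcal{H}_1,\mathcal{K})$ has a $\phi$-map extension $\Theta':\mathcal{E}\to\mathcal{B}(\mathcal{H}_1,\mathcal{K})$.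
   Context: For Hilbert spaces $\mathcal{H},\mathcal{K}$, $\mathcal{B}(\mathcal{H},\mathcal{K})$ is a right Hilbert $\mathcal{B}(\mathcal{H})$-module with module action given by composition and inner product $\langle T,S\rangle=T^*S$. For a completely positive map $\phi:\mathcal{A}\to\mathcal{B}(\mathcal{H}_1)$ and a Hilbert $\mathcal{A}$-module $\mathcal{X}$, a map $\Phi:\mathcal{X}\to\mathcal{B}(\mathcal{H}_1,\mathcal{K})$ is a $\phi$-map if $\Phi(x)^*\Phi(y)=\phi(\langle x,y\rangle)$ for all $x,y\in\mathcal{X}$; it is non-degenerate if the closed linear span of $\{\Phi(x)h: x\in\mathcal{X},h\in\mathcal{H}_1\}$ equals $\mathcal{K}$. $\mathcal{F}^{\perp}=\{x\in\mathcal{E}:\langle x,y\rangle=0\text{ for all }y\in\mathcal{F}\}$. *)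

theory Defs
  imports "HOL-Analysis.Analysis"
begin

class cvec = real_vector +
  fixes cscale :: "complex \<Rightarrow> 'a \<Rightarrow> 'a"
  assumes cscale_add_right: "cscale c (x + y) = cscale c x + cscale c y"
    and cscale_add_left: "cscale (c + d) x = cscale c x + cscale d x"
    and cscale_cscale: "cscale c (cscale d x) = cscale (c * d) x"
    and cscale_one: "cscale 1 x = x"
    and scaleR_cscale: "scaleR r x = cscale (complex_of_real r) x"

class chilbert = cvec + banach +
  fixes hinner :: "'a \<Rightarrow> 'a \<Rightarrow> complex"
  assumes hinner_add_right: "hinner x (y + z) = hinner x y + hinner x z"
    and hinner_cscale_right: "hinner x (cscale c y) = c * hinner x y"
    and hinner_conj: "hinner y x = cnj (hinner x y)"
    and hinner_self_nonneg: "0 \<le> Re (hinner x x)"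
    and norm_hinner: "norm x = sqrt (Re (hinner x x))"

class cstar = cvec + real_normed_algebra + banach +
  fixes adjA :: "'a \<Rightarrow> 'a"
  assumes norm_cscale: "norm (cscale c a) = cmod c * norm a"
    and mult_cscale_left: "cscale c a * b = cscale c (a * b)"
    and mult_cscale_right: "a * cscale c b = cscale c (a * b)"
    and adjA_adjA: "adjA (adjA a) = a"
    and adjA_add: "adjA (a + b) = adjA a + adjA b"
    and adjA_cscale: "adjA (cscale c a) = cscale (cnj c) (adjA a)"
    and adjA_mult: "adjA (a * b) = adjA b * adjA a"
    and cstar_identity: "norm (adjA a * a) = (norm a)^2"

definition cpositive :: "'a::cstar \<Rightarrow> bool" where
  "cpositive a \<longleftrightarrow> (\<exists>b. a = adjA b * b)"

definition cnonneg :: "complex \<Rightarrow> bool" where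
  "cnonneg z \<longleftrightarrow> Im z = 0 \<and> 0 \<le> Re z"

definition hm_norm :: "('e \<Rightarrow> 'e \<Rightarrow> 'a::cstar) \<Rightarrow> 'e \<Rightarrow> real" where
  "hm_norm ip x = sqrt (norm (ip x x))"

definition hm_tendsto :: "('e::cvec \<Rightarrow> 'e \<Rightarrow> 'a::cstar) \<Rightarrow> (nat \<Rightarrow> 'e) \<Rightarrow> 'e \<Rightarrow> bool" where
  "hm_tendsto ip X L \<longleftrightarrow> (\<forall>e>0. \<exists>N. \<forall>n\<ge>N. hm_norm ip (X n - L) < e)"

definition hm_cauchy :: "('e::cvec \<Rightarrow> 'e \<Rightarrow> 'a::cstar) \<Rightarrow> (nat \<Rightarrow> 'e) \<Rightarrow> bool" where
  "hm_cauchy ip X \<longleftrightarrow> (\<forall>e>0. \<exists>N. \<forall>m\<ge>N. \<forall>n\<ge>N. hm_norm ip (X m - X n) < e)"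

definition hilbert_module :: "('e::cvec \<Rightarrow> 'a::cstar \<Rightarrow> 'e) \<Rightarrow> ('e \<Rightarrow> 'e \<Rightarrow> 'a) \<Rightarrow> bool" where
  "hilbert_module act ip \<longleftrightarrow>
     (\<forall>x y a. act (x + y) a = act x a + act y a) \<and>
     (\<forall>x a b. act x (a + b) = act x a + act x b) \<and>
     (\<forall>x a b. act (act x a) b = act x (a * b)) \<and>
     (\<forall>c x a. act (cscale c x) a = cscale c (act x a)) \<and>
     (\<forall>c x a. act x (cscale c a) = cscale c (act x a)) \<and>
     (\<forall>x y z. ip x (y + z) = ip x y + ip x z) \<and>
     (\<forall>c x y. ip x (cscale c y) = cscale c (ip x y)) \<and>
     (\<forall>x y a. ip x (act y a) = ip x y * a) \<and>
     (\<forall>x y. adjA (ip x y) = ip y x) \<and>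
     (\<forall>x. cpositive (ip x x)) \<and>
     (\<forall>x. ip x x = 0 \<longrightarrow> x = 0) \<and>
     (\<forall>X. hm_cauchy ip X \<longrightarrow> (\<exists>L. hm_tendsto ip X L))"

definition closed_submodule :: "('e::cvec \<Rightarrow> 'a::cstar \<Rightarrow> 'e) \<Rightarrow> ('e \<Rightarrow> 'e \<Rightarrow> 'a) \<Rightarrow> 'e set \<Rightarrow> bool" where
  "closed_submodule act ip F \<longleftrightarrow>
     0 \<in> F \<and>
     (\<forall>x\<in>F. \<forall>y\<in>F. x + y \<in> F) \<and>
     (\<forall>c. \<forall>x\<in>F. cscale c x \<in> F) \<and>
     (\<forall>x\<in>F. \<forall>a. act x a \<in> F) \<and>
     (\<forall>X L. (\<forall>n. X n \<in> F) \<and> hm_tendsto ip X L \<longrightarrow> L \<in> F)"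

definition module_orth :: "('e \<Rightarrow> 'e \<Rightarrow> 'a::cstar) \<Rightarrow> 'e set \<Rightarrow> 'e set" where
  "module_orth ip F = {x. \<forall>y\<in>F. ip x y = 0}"

definition cblin :: "('h::chilbert \<Rightarrow> 'k::chilbert) \<Rightarrow> bool" where
  "cblin T \<longleftrightarrow> (\<forall>x y. T (x + y) = T x + T y) \<and> (\<forall>c x. T (cscale c x) = cscale c (T x))
      \<and> (\<exists>C. \<forall>x. norm (T x) \<le> C * norm x)"

definition cadj :: "('h::chilbert \<Rightarrow> 'k::chilbert) \<Rightarrow> 'k \<Rightarrow> 'h" where
  "cadj T = (\<lambda>y. THE z. \<forall>x. hinner (T x) y = hinner x z)"

definition complex_span :: "'h::cvec set \<Rightarrow> 'h set" where
  "complex_span S = {x. \<exists>(n::nat) c v. (\<forall>i<n. v i \<in> S) \<and> x = (\<Sum>i<n. cscale (c i) (v i))}"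

text \<open>\<open>\<phi> : A \<rightarrow> B(H)\<close> completely positive: linear, with values bounded operators, and
  every amplification \<open>\<phi>\<^sub>n\<close> maps positive matrices \<open>B* B\<close> in \<open>M\<^sub>n(A)\<close> to positive
  operators on \<open>H\<^sup>n\<close>.\<close>
definition completely_positive :: "('a::cstar \<Rightarrow> 'h::chilbert \<Rightarrow> 'h) \<Rightarrow> bool" where
  "completely_positive \<phi> \<longleftrightarrow>
     (\<forall>a. cblin (\<phi> a)) \<and>
     (\<forall>a b h. \<phi> (a + b) h = \<phi> a h + \<phi> b h) \<and>
     (\<forall>c a h. \<phi> (cscale c a) h = cscale c (\<phi> a h)) \<and>
     (\<forall>(n::nat) (B :: nat \<Rightarrow> nat \<Rightarrow> 'a) (h :: nat \<Rightarrow> 'h).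
        cnonneg (\<Sum>i<n. \<Sum>j<n. hinner (h i) (\<phi> (\<Sum>k<n. adjA (B k i) * B k j) (h j))))"

definition phi_map :: "('e \<Rightarrow> 'e \<Rightarrow> 'a::cstar) \<Rightarrow> ('a \<Rightarrow> 'h::chilbert \<Rightarrow> 'h) \<Rightarrow> 'e set
     \<Rightarrow> ('e \<Rightarrow> 'h \<Rightarrow> 'k::chilbert) \<Rightarrow> bool" where
  "phi_map ip \<phi> X \<Phi> \<longleftrightarrow>
     (\<forall>x\<in>X. cblin (\<Phi> x)) \<and> (\<forall>x\<in>X. \<forall>y\<in>X. cadj (\<Phi> x) \<circ> \<Phi> y = \<phi> (ip x y))"

definition nondegenerate :: "'e set \<Rightarrow> ('e \<Rightarrow> 'h::chilbert \<Rightarrow> 'k::chilbert) \<Rightarrow> bool" where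
  "nondegenerate X \<Phi> \<longleftrightarrow> closure (complex_span {\<Phi> x h | x h. x \<in> X}) = UNIV"

end

theory Submission
  imports Defs
begin


lemma cscale_zero_right[simp]: "cscale c (0::'a::cvec) = 0"
proof -
  have "cscale c (0::'a) = cscale c 0 + cscale c 0" using cscale_add_right[of c "0::'a" 0] by simp
  then show ?thesis by simp
qed

lemma cscale_of_real: "cscale (complex_of_real r) (x::'a::cvec) = r *\<^sub>R x"
  by (simp add: scaleR_cscale)

lemma cscale_zero_left[simp]: "cscale 0 (x::'a::cvec) = 0"
  using cscale_of_real[of 0 x] by simp

lemma cscale_minus_right: "cscale c (- (x::'a::cvec)) = - cscale c x"
proof -
  have "cscale c (x + - x) = 0" by simp
  then show ?thesis unfolding cscale_add_right by (simp add: add_eq_0_iff)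
qed

lemma cscale_diff_right: "cscale c ((x::'a::cvec) - y) = cscale c x - cscale c y"
  using cscale_add_right[of c x "-y"] by (simp add: cscale_minus_right)

lemma cscale_minus_left: "cscale (- c) (x::'a::cvec) = - cscale c x"
proof -
  have "cscale (c + - c) x = 0" by simp
  then show ?thesis unfolding cscale_add_left by (simp add: add_eq_0_iff)
qed

lemma cscale_sum_right: "cscale c (\<Sum>i\<in>I. f i) = (\<Sum>i\<in>I. cscale c (f i :: 'a::cvec))"
  by (induction I rule: infinite_finite_induct) (auto simp: cscale_add_right)

lemma hinner_zero_right[simp]: "hinner x (0::'a::chilbert) = 0"
proof -
  have "hinner x (0::'a) = hinner x 0 + hinner x 0" using hinner_add_right[of x "0::'a" 0] by simp
  then show ?thesis by simp
qed

lemma hinner_zero_left[simp]: "hinner (0::'a::chilbert) x = 0"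
  using hinner_conj[of 0 x] by simp

lemma hinner_add_left: "hinner ((x::'a::chilbert) + y) z = hinner x z + hinner y z"
  by (metis complex_cnj_add hinner_add_right hinner_conj)

lemma hinner_cscale_left: "hinner (cscale c (x::'a::chilbert)) y = cnj c * hinner x y"
  by (metis complex_cnj_cnj complex_cnj_mult hinner_cscale_right hinner_conj)

lemma hinner_minus_right: "hinner x (- (y::'a::chilbert)) = - hinner x y"
  by (metis add.right_inverse add_eq_0_iff hinner_add_right hinner_zero_right)

lemma hinner_minus_left: "hinner (- (x::'a::chilbert)) y = - hinner x y"
  by (metis complex_cnj_minus hinner_conj hinner_minus_right)

lemma hinner_diff_right: "hinner x ((y::'a::chilbert) - z) = hinner x y - hinner x z"
  using hinner_add_right[of x y "-z"] by (simp add: hinner_minus_right)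

lemma hinner_diff_left: "hinner ((x::'a::chilbert) - y) z = hinner x z - hinner y z"
  using hinner_add_left[of x "-y" z] by (simp add: hinner_minus_left)

lemma hinner_self: "hinner (x::'a::chilbert) x = complex_of_real ((norm x)^2)"
proof -
  have "Im (hinner x x) = 0" using hinner_conj[of x x] by (metis cnj.simps(2) neg_equal_zero)
  moreover have "Re (hinner x x) = (norm x)^2" using norm_hinner[of x] hinner_self_nonneg[of x] by simp
  ultimately show ?thesis by (simp add: complex_eq_iff)
qed

lemma hinner_self_eq_0[simp]: "hinner (x::'a::chilbert) x = 0 \<longleftrightarrow> x = 0"
  by (simp add: hinner_self)

lemma norm_sq_hinner: "(norm (x::'a::chilbert))^2 = Re (hinner x x)"
  by (simp add: hinner_self)

lemma hinner_sum_right: "hinner x (\<Sum>i\<in>I. f i) = (\<Sum>i\<in>I. hinner x (f i :: 'a::chilbert))"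
  by (induction I rule: infinite_finite_induct) (auto simp: hinner_add_right)

lemma hinner_sum_left: "hinner (\<Sum>i\<in>I. f i) x = (\<Sum>i\<in>I. hinner (f i :: 'a::chilbert) x)"
  by (induction I rule: infinite_finite_induct) (auto simp: hinner_add_left)

lemma norm_cscale_h: "norm (cscale c (x::'a::chilbert)) = cmod c * norm x"
proof -
  have "(norm (cscale c x))^2 = (cmod c * norm x)^2"
    unfolding norm_sq_hinner hinner_cscale_left hinner_cscale_right mult.assoc[symmetric]
    by (metis Re_complex_of_real complex_norm_square hinner_self mult.commute of_real_mult power_mult_distrib)
  then show ?thesis by (simp add: power2_eq_iff_nonneg)
qed

lemma Re_hinner_polar: "Re (hinner (x::'a::chilbert) y) = ((norm (x+y))^2 - (norm (x-y))^2) / 4"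
proof -
  have "Re (hinner y x) = Re (hinner x y)" using hinner_conj[of y x] by simp
  then show ?thesis unfolding norm_sq_hinner
    by (simp add: hinner_add_left hinner_add_right hinner_diff_left hinner_diff_right)
qed

lemma Im_hinner_polar: "Im (hinner (x::'a::chilbert) y) = Re (hinner (cscale \<i> x) y)"
  by (simp add: hinner_cscale_left)

lemma tendsto_hinner:
  fixes X :: "nat \<Rightarrow> 'a::chilbert"
  assumes "X \<longlonglongrightarrow> a" "Y \<longlonglongrightarrow> b"
  shows "(\<lambda>n. hinner (X n) (Y n)) \<longlonglongrightarrow> hinner a b"
proof -
  have re: "(\<lambda>n. Re (hinner (X n) (Y n))) \<longlonglongrightarrow> Re (hinner a b)" if "X \<longlonglongrightarrow> a" for X :: "nat \<Rightarrow> 'a" and a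
    unfolding Re_hinner_polar
    by (rule tendsto_divide[OF tendsto_diff[OF tendsto_power[OF tendsto_norm[OF tendsto_add[OF that assms(2)]]]
          tendsto_power[OF tendsto_norm[OF tendsto_diff[OF that assms(2)]]]] tendsto_const]) simp
  have ci: "(\<lambda>n. cscale \<i> (X n)) \<longlonglongrightarrow> cscale \<i> a"
  proof -
    have "(\<lambda>n. norm (cscale \<i> (X n) - cscale \<i> a)) = (\<lambda>n. norm (X n - a))"
      by (simp add: cscale_diff_right[symmetric] norm_cscale_h)
    moreover have "(\<lambda>n. norm (X n - a)) \<longlonglongrightarrow> 0"
      by (rule tendsto_norm_zero[OF LIM_zero[OF assms(1)]])
    ultimately have "(\<lambda>n. norm (cscale \<i> (X n) - cscale \<i> a)) \<longlonglongrightarrow> 0" by simp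
    then show ?thesis by (rule LIM_zero_cancel[OF tendsto_norm_zero_cancel])
  qed
  show ?thesis unfolding tendsto_complex_iff
    using re[OF assms(1)] re[OF ci] unfolding Im_hinner_polar by simp
qed




lemma norm_sq_sum: "(norm ((x::'a::chilbert) + y))^2 = (norm x)^2 + (norm y)^2 + 2 * Re (hinner x y)"
proof -
  have "Re (hinner y x) = Re (hinner x y)" using hinner_conj[of y x] by simp
  then show ?thesis unfolding norm_sq_hinner by (simp add: hinner_add_left hinner_add_right)
qed

lemma norm_sq_diff: "(norm ((x::'a::chilbert) - y))^2 = (norm x)^2 + (norm y)^2 - 2 * Re (hinner x y)"
proof -
  have "Re (hinner y x) = Re (hinner x y)" using hinner_conj[of y x] by simp
  then show ?thesis unfolding norm_sq_hinner by (simp add: hinner_diff_left hinner_diff_right)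
qed

lemma parallelogram: "(norm ((x::'a::chilbert) - y))^2 = 2*(norm x)^2 + 2*(norm y)^2 - (norm (x+y))^2"
  using norm_sq_sum[of x y] norm_sq_diff[of x y] by simp

lemma aux_ineq:
  fixes a b c d p q :: real
  assumes "a \<le> (d+p)^2" "b \<le> (d+q)^2" "(2*d)^2 \<le> c"
  shows "2*a + 2*b - c \<le> 4*d*(p+q) + 2*p^2 + 2*q^2"
proof -
  have "(d+p)^2 = d*d + 2*(d*p) + p*p" "(d+q)^2 = d*d + 2*(d*q) + q*q" "(2*d)^2 = 4*(d*d)"
    "4*d*(p+q) = 4*(d*p) + 4*(d*q)" "p^2 = p*p" "q^2 = q*q"
    by (simp_all add: power2_eq_square algebra_simps)
  then show ?thesis using assms by linarith
qed

lemma riesz: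
  fixes f :: "'a::chilbert \<Rightarrow> complex"
  assumes fadd: "\<And>x y. f (x + y) = f x + f y"
    and fsc: "\<And>c x. f (cscale c x) = c * f x"
    and fcont: "\<And>X L. X \<longlonglongrightarrow> L \<Longrightarrow> (\<lambda>n. f (X n)) \<longlonglongrightarrow> f L"
  shows "\<exists>z. \<forall>x. f x = hinner z x"
proof (cases "\<forall>x. f x = 0")
  case True then show ?thesis by (intro exI[of _ 0]) simp
next
  case False
  then obtain x1 where "f x1 \<noteq> 0" by auto
  hence f1: "f (cscale (1 / f x1) x1) = 1" by (simp add: fsc)
  have f0: "f 0 = 0" using fadd[of 0 0] by simp
  define A where "A = norm ` {x. f x = 1}"
  define d where "d = Inf A"
  have Ane: "A \<noteq> {}" using f1 unfolding A_def by auto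
  have Abdd: "bdd_below A" unfolding A_def by (intro bdd_belowI[of _ 0]) auto
  have d0: "d \<ge> 0" unfolding d_def using Ane by (intro cInf_greatest) (auto simp: A_def)
  have "\<exists>x. f x = 1 \<and> norm x < d + 1 / real (Suc n)" for n
  proof -
    have "Inf A < d + 1 / real (Suc n)" unfolding d_def by simp
    then obtain a where "a \<in> A" "a < d + 1 / real (Suc n)" using cInf_less_iff[OF Ane Abdd] by auto
    then show ?thesis unfolding A_def by auto
  qed
  then obtain X where X1: "\<And>n. f (X n) = 1" and Xn: "\<And>n. norm (X n) < d + 1 / real (Suc n)"
    by metis
  have dle: "d \<le> norm y" if "f y = 1" for y
    unfolding d_def using that Abdd by (intro cInf_lower) (auto simp: A_def)
  have mid: "2 * d \<le> norm (X m + X n)" for m n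
  proof -
    have "f (cscale (1/2) (X m + X n)) = 1" by (simp add: fsc fadd X1)
    hence "d \<le> norm (cscale (1/2) (X m + X n))" by (rule dle)
    then show ?thesis by (simp add: norm_cscale_h)
  qed
  have bnd: "(norm (X m - X n))^2 \<le> 4 * d * (1 / real (Suc m) + 1 / real (Suc n))
        + 2 * (1 / real (Suc m))^2 + 2 * (1 / real (Suc n))^2" for m n
  proof -
    have a: "(norm (X m))^2 \<le> (d + 1 / real (Suc m))^2" using Xn[of m]
      by (intro power_mono) auto
    have b: "(norm (X n))^2 \<le> (d + 1 / real (Suc n))^2" using Xn[of n]
      by (intro power_mono) auto
    have c: "(2*d)^2 \<le> (norm (X m + X n))^2" using mid[of m n] d0 by (intro power_mono) auto
    show ?thesis unfolding parallelogram by (rule aux_ineq[OF a b c])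
  qed
  have "Cauchy X"
  proof (rule metric_CauchyI)
    fix e :: real assume e: "e > 0"
    define t where "t = min 1 (e^2 / (8*d+8))"
    have t0: "t > 0" unfolding t_def using e d0 by auto
    obtain N where N: "1 / real (Suc N) < t" using reals_Archimedean[OF t0] by (auto simp: field_simps)
    have "dist (X m) (X n) < e" if "m \<ge> N" "n \<ge> N" for m n
    proof -
      have im: "1 / real (Suc m) \<le> 1 / real (Suc N)" using that by (simp add: frac_le)
      have inn: "1 / real (Suc n) \<le> 1 / real (Suc N)" using that by (simp add: frac_le)
      define u where "u = 1 / real (Suc N)"
      have u0: "0 < u" "u < t" "u \<le> 1" using N t_def by (auto simp: u_def)
      have "(norm (X m - X n))^2 \<le> 4 * d * (u + u) + 2 * u^2 + 2 * u^2"
      proof -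
        have "4 * d * (1 / real (Suc m) + 1 / real (Suc n)) \<le> 4 * d * (u + u)"
          using im inn d0 unfolding u_def by (intro mult_left_mono) auto
        moreover have "(1 / real (Suc m))^2 \<le> u^2" using im unfolding u_def by (intro power_mono) auto
        moreover have "(1 / real (Suc n))^2 \<le> u^2" using inn unfolding u_def by (intro power_mono) auto
        ultimately show ?thesis using bnd[of m n] by linarith
      qed
      also have "\<dots> \<le> u * (8 * d + 4)"
      proof -
        have "u * u \<le> u * 1" using u0 by (intro mult_left_mono) auto
        hence "u^2 \<le> u" by (simp add: power2_eq_square)
        moreover have "4 * d * (u + u) + 2 * u^2 + 2 * u^2 = 8*d*u + 4*u^2" by algebra
        moreover have "u * (8 * d + 4) = 8*d*u + 4*u" by algebra
        ultimately show ?thesis by linarith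
      qed
      also have "\<dots> < e^2"
      proof -
        have "u * (8 * d + 4) < t * (8 * d + 8)" using u0 d0
          by (intro mult_strict_mono) auto
        also have "\<dots> \<le> e^2"
        proof -
          have "t \<le> e^2 / (8*d+8)" unfolding t_def by simp
          then show ?thesis using d0 by (simp add: pos_le_divide_eq)
        qed
        finally show ?thesis .
      qed
      finally have "(norm (X m - X n))^2 < e^2" .
      then show ?thesis unfolding dist_norm using e by (simp add: power_less_imp_less_base)
    qed
    then show "\<exists>N. \<forall>m\<ge>N. \<forall>n\<ge>N. dist (X m) (X n) < e" by blast
  qed
  then obtain x0 where x0: "X \<longlonglongrightarrow> x0" using Cauchy_convergent_iff convergent_def by blast
  have fx0: "f x0 = 1"
  proof -
    have "(\<lambda>n. f (X n)) \<longlonglongrightarrow> f x0" by (rule fcont[OF x0])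
    moreover have "(\<lambda>n. f (X n)) = (\<lambda>n. 1)" using X1 by simp
    ultimately have "(\<lambda>n. 1) \<longlonglongrightarrow> f x0" by simp
    then show ?thesis using LIMSEQ_unique[OF tendsto_const] by metis
  qed
  have x0min: "norm x0 \<le> norm y" if "f y = 1" for y
  proof -
    have lim: "(\<lambda>n. d + 1 / real (Suc n)) \<longlonglongrightarrow> d + 0"
      by (rule tendsto_add[OF tendsto_const LIMSEQ_Suc[OF lim_inverse_n']])
    have all: "\<forall>n\<ge>0. norm (X n) \<le> d + 1 / real (Suc n)" using Xn less_imp_le by blast
    have "norm x0 \<le> d + 0" using LIMSEQ_le[OF tendsto_norm[OF x0] lim] all by blast
    hence "norm x0 \<le> d" by simp
    then show ?thesis using dle[OF that] by simp
  qed
  have x0ne: "x0 \<noteq> 0" using fx0 f0 by auto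
  have orth: "hinner x0 n = 0" if "f n = 0" for n
  proof (cases "n = 0")
    case True then show ?thesis by simp
  next
    case False
    define a where "a = hinner x0 n"
    define N where "N = (norm n)^2"
    have N0: "N > 0" using False by (simp add: N_def)
    define t where "t = - cnj a / complex_of_real N"
    have "f (x0 + cscale t n) = 1" by (simp add: fadd fsc fx0 that)
    hence "(norm x0)^2 \<le> (norm (x0 + cscale t n))^2" using x0min by (simp add: power_mono)
    also have "(norm (x0 + cscale t n))^2 = (norm x0)^2 - (cmod a)^2 / N"
    proof -
      have e1: "hinner n x0 = cnj a" unfolding a_def using hinner_conj by metis
      have "hinner (x0 + cscale t n) (x0 + cscale t n)
          = hinner x0 x0 + t * a + cnj t * cnj a + cnj t * t * hinner n n"
        by (simp add: hinner_add_left hinner_add_right hinner_cscale_left hinner_cscale_right e1 a_def algebra_simps)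
      also have "\<dots> = complex_of_real ((norm x0)^2 - (cmod a)^2 / N)"
      proof -
        define k where "k = a * cnj a"
        have k: "complex_of_real ((cmod a)^2) = k" unfolding k_def by (rule complex_norm_square)
        have ct: "cnj t = - a / complex_of_real N" by (simp add: t_def)
        have Nc: "complex_of_real N \<noteq> 0" using N0 by simp
        have "hinner x0 x0 + t * a + cnj t * cnj a + cnj t * t * hinner n n
            = hinner x0 x0 - k / complex_of_real N"
          unfolding ct unfolding t_def hinner_self[of n] N_def[symmetric] k_def using Nc
          by (simp add: field_simps power2_eq_square)
        then show ?thesis unfolding hinner_self[of x0] k[symmetric] by simp
      qed
      finally show ?thesis unfolding norm_sq_hinner by simp
    qed
    finally have "(cmod a)^2 / N \<le> 0" by simp
    hence "(cmod a)^2 \<le> 0" using N0 by (simp add: divide_le_0_iff)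
    then show ?thesis unfolding a_def by simp
  qed
  define z where "z = cscale (complex_of_real (1 / (norm x0)^2)) x0"
  show ?thesis
  proof (intro exI allI)
    fix x
    have "f (x + cscale (- f x) x0) = 0" by (simp add: fadd fsc fx0)
    hence "hinner x0 (x + cscale (- f x) x0) = 0" by (rule orth)
    hence "hinner x0 x = f x * hinner x0 x0" by (simp add: hinner_add_right hinner_cscale_right)
    then show "f x = hinner z x" unfolding z_def hinner_cscale_left hinner_self using x0ne
      by (simp add: field_simps)
  qed
qed



lemma cblin_add: "cblin T \<Longrightarrow> T (a + b) = T a + T b" by (simp add: cblin_def)
lemma cblin_cscale: "cblin T \<Longrightarrow> T (cscale c a) = cscale c (T a)" by (simp add: cblin_def)

lemma cblin_diff: assumes "cblin T" shows "T (a - b) = T a - T b"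
proof -
  have "T (a - b) + T b = T a" using cblin_add[OF assms, of "a - b" b] by simp
  then show ?thesis by (simp add: eq_diff_eq)
qed

lemma cblin_tendsto:
  assumes "cblin T" "X \<longlonglongrightarrow> L"
  shows "(\<lambda>n. T (X n)) \<longlonglongrightarrow> T L"
proof -
  obtain C where C: "\<And>x. norm (T x) \<le> C * norm x" using assms(1) unfolding cblin_def by blast
  have "(\<lambda>n. norm (X n - L)) \<longlonglongrightarrow> 0"
    by (rule tendsto_norm_zero[OF LIM_zero[OF assms(2)]])
  hence g: "(\<lambda>n. C * norm (X n - L)) \<longlonglongrightarrow> 0" by (rule tendsto_mult_right_zero)
  have "\<forall>\<^sub>F n in sequentially. norm (T (X n) - T L) \<le> C * norm (X n - L)"
  proof (intro always_eventually allI)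
    fix n show "norm (T (X n) - T L) \<le> C * norm (X n - L)"
      using C[of "X n - L"] by (simp add: cblin_diff[OF assms(1)])
  qed
  hence "(\<lambda>n. T (X n) - T L) \<longlonglongrightarrow> 0" using g by (rule Lim_null_comparison)
  then show ?thesis by (rule LIM_zero_cancel)
qed

lemma adj_exists:
  fixes T :: "'h::chilbert \<Rightarrow> 'k::chilbert"
  assumes "cblin T"
  shows "\<exists>z. \<forall>x. hinner (T x) w = hinner x z"
proof -
  have "\<exists>z. \<forall>x. hinner w (T x) = hinner z x"
  proof (rule riesz)
    show "hinner w (T (x + y)) = hinner w (T x) + hinner w (T y)" for x y
      by (simp add: cblin_add[OF assms] hinner_add_right)
    show "hinner w (T (cscale c x)) = c * hinner w (T x)" for c x
      by (simp add: cblin_cscale[OF assms] hinner_cscale_right)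
    show "(\<lambda>n. hinner w (T (X n))) \<longlonglongrightarrow> hinner w (T L)" if "X \<longlonglongrightarrow> L" for X L
      by (rule tendsto_hinner[OF tendsto_const cblin_tendsto[OF assms that]])
  qed
  then obtain z where z: "\<And>x. hinner w (T x) = hinner z x" by blast
  show ?thesis
  proof (intro exI allI)
    fix x show "hinner (T x) w = hinner x z" using z[of x] hinner_conj by metis
  qed
qed

lemma cadj_prop:
  fixes T :: "'h::chilbert \<Rightarrow> 'k::chilbert"
  assumes "cblin T"
  shows "hinner (T x) w = hinner x (cadj T w)"
proof -
  obtain z where z: "\<forall>x. hinner (T x) w = hinner x z" using adj_exists[OF assms] by blast
  have "(THE z. \<forall>x. hinner (T x) w = hinner x z) = z"
  proof (rule the_equality)
    show "\<forall>x. hinner (T x) w = hinner x z" by (rule z)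
    fix z' assume z': "\<forall>x. hinner (T x) w = hinner x z'"
    have "hinner (z' - z) (z' - z) = 0" using z z' by (simp add: hinner_diff_right)
    then show "z' = z" by simp
  qed
  then show ?thesis using z unfolding cadj_def by simp
qed

lemma phi_inner:
  assumes "phi_map ip \<phi> X \<Phi>" "x \<in> X" "y \<in> X"
  shows "hinner (\<Phi> x h) (\<Phi> y k) = hinner h (\<phi> (ip x y) k)"
proof -
  have cb: "cblin (\<Phi> x)" using assms unfolding phi_map_def by blast
  have "cadj (\<Phi> x) \<circ> \<Phi> y = \<phi> (ip x y)" using assms unfolding phi_map_def by blast
  hence "cadj (\<Phi> x) (\<Phi> y k) = \<phi> (ip x y) k" by (metis comp_apply)
  then show ?thesis using cadj_prop[OF cb] by metis
qed

lemma pres_add: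
  fixes V :: "'h::chilbert \<Rightarrow> 'k::chilbert"
  assumes P: "\<And>a b. hinner (V a) (V b) = hinner a b"
  shows "V (a + b) = V a + V b"
proof -
  define u where "u = V (a + b) - V a - V b"
  have uq: "hinner u (V q) = 0" for q
    unfolding u_def by (simp add: hinner_diff_left P hinner_add_left)
  have "hinner u u = 0"
    by (subst (2) u_def) (simp add: hinner_diff_right uq)
  hence "u = 0" by simp
  moreover have "V (a + b) = u + V a + V b" unfolding u_def by simp
  ultimately show ?thesis by simp
qed

lemma pres_scale:
  fixes V :: "'h::chilbert \<Rightarrow> 'k::chilbert"
  assumes P: "\<And>a b. hinner (V a) (V b) = hinner a b"
  shows "V (cscale c a) = cscale c (V a)"
proof -
  define u where "u = V (cscale c a) - cscale c (V a)"
  have uq: "hinner u (V q) = 0" for q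
    unfolding u_def by (simp add: hinner_diff_left P hinner_cscale_left)
  have "hinner u u = 0"
    by (subst (2) u_def) (simp add: hinner_diff_right hinner_cscale_right uq)
  then show ?thesis unfolding u_def by simp
qed

lemma norm_eq_from_inner:
  fixes a a' :: "'h::chilbert" and b b' :: "'k::chilbert"
  assumes "hinner b b = hinner a a" "hinner b' b' = hinner a' a'" "hinner b b' = hinner a a'"
  shows "norm (b - b') = norm (a - a')"
proof -
  have "hinner b' b = hinner a' a" using assms(3) hinner_conj by metis
  hence "(norm (b - b'))^2 = (norm (a - a'))^2" unfolding norm_sq_hinner
    by (simp add: hinner_diff_left hinner_diff_right assms)
  then show ?thesis by (simp add: power2_eq_iff_nonneg)
qed



lemma adjA_zero: "adjA (0::'a::cstar) = 0"
proof -
  have "adjA (0::'a) = adjA 0 + adjA 0" using adjA_add[of "0::'a" 0] by simp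
  then show ?thesis by simp
qed

lemma cp_zero: "completely_positive \<phi> \<Longrightarrow> \<phi> 0 h = 0"
proof -
  assume "completely_positive \<phi>"
  hence "\<phi> (0 + 0) h = \<phi> 0 h + \<phi> 0 h" unfolding completely_positive_def by blast
  then show ?thesis by simp
qed

lemma span_orth:
  fixes w :: "'h::chilbert"
  assumes "s \<in> complex_span S" "\<forall>v\<in>S. hinner v w = 0"
  shows "hinner s w = 0"
proof -
  obtain n :: nat and c v where v: "\<forall>i<n. v i \<in> S" and s: "s = (\<Sum>i<n. cscale (c i) (v i))"
    using assms(1) unfolding complex_span_def by force
  show ?thesis unfolding s hinner_sum_left hinner_cscale_left using v assms(2) by simp
qed

lemma dense_orth_zero:
  fixes w :: "'h::chilbert"
  assumes "closure (complex_span S) = UNIV" "\<forall>v\<in>S. hinner v w = 0"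
  shows "w = 0"
proof -
  have le: "norm w \<le> norm (w - s)" if "s \<in> complex_span S" for s
  proof -
    have "hinner s w = 0" by (rule span_orth[OF that assms(2)])
    hence "hinner w s = 0" using hinner_conj by (metis complex_cnj_zero)
    hence "(norm (w - s))^2 = (norm w)^2 + (norm s)^2" by (simp add: norm_sq_diff)
    hence "(norm w)^2 \<le> (norm (w - s))^2" by simp
    then show ?thesis by (simp add: power2_le_iff_abs_le)
  qed
  have "w \<in> closure (complex_span S)" using assms(1) by simp
  hence "\<forall>e>0. \<exists>s\<in>complex_span S. dist s w < e" by (simp add: closure_approachable)
  hence "\<forall>e>0. norm w < e" using le by (metis dist_norm norm_minus_commute order_le_less_trans)
  hence "norm w = 0" by (metis less_irrefl norm_ge_zero order_le_less)
  then show ?thesis by simp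
qed

lemma part1:
  fixes ip :: "'e::cvec \<Rightarrow> 'e \<Rightarrow> 'a::cstar" and \<phi> :: "'a \<Rightarrow> 'h1::chilbert \<Rightarrow> 'h1"
    and \<Phi> \<Psi> :: "'e \<Rightarrow> 'h1 \<Rightarrow> 'h2::chilbert"
  assumes hm: "hilbert_module act ip"
    and cp: "completely_positive \<phi>"
    and pF: "phi_map ip \<phi> F \<Phi>"
    and nd: "nondegenerate F \<Phi>"
    and pU: "phi_map ip \<phi> UNIV \<Psi>"
    and ext: "\<forall>x\<in>F. \<Psi> x = \<Phi> x"
    and z: "z \<in> module_orth ip F"
  shows "\<phi> (ip z x) h = 0"
proof -
  have Psi0: "\<Psi> z k = 0" for k
  proof (rule dense_orth_zero)
    show "closure (complex_span {\<Phi> x h | x h. x \<in> F}) = UNIV" using nd unfolding nondegenerate_def .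
    show "\<forall>v\<in>{\<Phi> x h | x h. x \<in> F}. hinner v (\<Psi> z k) = 0"
    proof safe
      fix y h assume y: "y \<in> F"
      have "ip z y = 0" using z y unfolding module_orth_def by blast
      hence "ip y z = 0" using hm unfolding hilbert_module_def by (metis adjA_zero)
      have "hinner (\<Phi> y h) (\<Psi> z k) = hinner (\<Psi> y h) (\<Psi> z k)" using ext y by simp
      also have "\<dots> = hinner h (\<phi> (ip y z) k)" by (rule phi_inner[OF pU]) auto
      also have "\<dots> = 0" using \<open>ip y z = 0\<close> cp_zero[OF cp] by simp
      finally show "hinner (\<Phi> y h) (\<Psi> z k) = 0" .
    qed
  qed
  have cb: "cblin (\<Psi> z)" using pU unfolding phi_map_def by blast
  have "cadj (\<Psi> z) \<circ> \<Psi> x = \<phi> (ip z x)" using pU unfolding phi_map_def by blast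
  hence u: "\<phi> (ip z x) h = cadj (\<Psi> z) (\<Psi> x h)" by (metis comp_apply)
  define u where "u = cadj (\<Psi> z) (\<Psi> x h)"
  have "hinner (\<Psi> z u) (\<Psi> x h) = hinner u u" unfolding u_def by (rule cadj_prop[OF cb])
  hence "hinner u u = 0" using Psi0 by simp
  then show ?thesis using u u_def by simp
qed



lemma part2:
  fixes ip :: "'e::cvec \<Rightarrow> 'e \<Rightarrow> 'a::cstar" and \<phi> :: "'a \<Rightarrow> 'h1::chilbert \<Rightarrow> 'h1"
    and \<Phi> \<Psi> :: "'e \<Rightarrow> 'h1 \<Rightarrow> 'h2::chilbert"
    and \<Theta> :: "'e \<Rightarrow> 'h1 \<Rightarrow> 'k::chilbert"
  assumes pF: "phi_map ip \<phi> F \<Phi>"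
    and nd: "nondegenerate F \<Phi>"
    and pU: "phi_map ip \<phi> UNIV \<Psi>"
    and ext: "\<forall>x\<in>F. \<Psi> x = \<Phi> x"
    and pT: "phi_map ip \<phi> F \<Theta>"
  shows "\<exists>\<Theta>'. phi_map ip \<phi> UNIV \<Theta>' \<and> (\<forall>x\<in>F. \<Theta>' x = \<Theta> x)"
proof -
  define G where "G = {(a, b). \<exists>(n::nat) c xs hs. (\<forall>i<n. xs i \<in> F) \<and>
      a = (\<Sum>i<n. cscale (c i) (\<Phi> (xs i) (hs i))) \<and> b = (\<Sum>i<n. cscale (c i) (\<Theta> (xs i) (hs i)))}"
  have G1: "hinner b b' = hinner a a'" if ab1: "(a, b) \<in> G" and ab2: "(a', b') \<in> G" for a b a' b'
  proof -
    obtain n :: nat and c xs hs where xs: "\<forall>i<n. xs i \<in> F"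
      and a: "a = (\<Sum>i<n. cscale (c i) (\<Phi> (xs i) (hs i)))"
      and b: "b = (\<Sum>i<n. cscale (c i) (\<Theta> (xs i) (hs i)))"
      using ab1 unfolding G_def by blast
    obtain m :: nat and d ys ks where ys: "\<forall>i<m. ys i \<in> F"
      and a': "a' = (\<Sum>i<m. cscale (d i) (\<Phi> (ys i) (ks i)))"
      and b': "b' = (\<Sum>i<m. cscale (d i) (\<Theta> (ys i) (ks i)))"
      using ab2 unfolding G_def by blast
    have eq: "hinner (\<Theta> (xs i) (hs i)) (\<Theta> (ys j) (ks j)) = hinner (\<Phi> (xs i) (hs i)) (\<Phi> (ys j) (ks j))"
      if "i < n" "j < m" for i j
      using phi_inner[OF pT, of "xs i" "ys j"] phi_inner[OF pF, of "xs i" "ys j"] xs ys that by simp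
    show ?thesis unfolding a b a' b' hinner_sum_left hinner_sum_right hinner_cscale_left hinner_cscale_right
      using eq by (intro sum.cong refl) simp
  qed
  define Gb where "Gb = {(a, b). \<exists>A B. (\<forall>n. (A n, B n) \<in> G) \<and> A \<longlonglongrightarrow> a \<and> B \<longlonglongrightarrow> b}"
  have Gb1: "hinner b b' = hinner a a'" if ab1: "(a, b) \<in> Gb" and ab2: "(a', b') \<in> Gb" for a b a' b'
  proof -
    obtain A B where AB: "\<forall>n. (A n, B n) \<in> G" "A \<longlonglongrightarrow> a" "B \<longlonglongrightarrow> b" using ab1 unfolding Gb_def by blast
    obtain A' B' where AB': "\<forall>n. (A' n, B' n) \<in> G" "A' \<longlonglongrightarrow> a'" "B' \<longlonglongrightarrow> b'" using ab2 unfolding Gb_def by blast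
    have "(\<lambda>n. hinner (B n) (B' n)) \<longlonglongrightarrow> hinner b b'" by (rule tendsto_hinner[OF AB(3) AB'(3)])
    moreover have "(\<lambda>n. hinner (B n) (B' n)) = (\<lambda>n. hinner (A n) (A' n))" using G1 AB(1) AB'(1) by blast
    moreover have "(\<lambda>n. hinner (A n) (A' n)) \<longlonglongrightarrow> hinner a a'" by (rule tendsto_hinner[OF AB(2) AB'(2)])
    ultimately show ?thesis using LIMSEQ_unique by metis
  qed
  have Guniq: "b = b'" if "(a, b) \<in> Gb" "(a, b') \<in> Gb" for a b b'
  proof -
    have "norm (b - b') = norm (a - a)"
      by (rule norm_eq_from_inner) (use Gb1 that in blast)+
    then show ?thesis by simp
  qed
  have span_G: "\<exists>b. (s, b) \<in> G" if sp: "s \<in> complex_span {\<Phi> x h | x h. x \<in> F}" for s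
  proof -
    obtain n :: nat and c v where v: "\<forall>i<n. v i \<in> {\<Phi> x h | x h. x \<in> F}" and s: "s = (\<Sum>i<n. cscale (c i) (v i))"
      using sp unfolding complex_span_def by force
    have "\<forall>i. \<exists>p. i < n \<longrightarrow> fst p \<in> F \<and> v i = \<Phi> (fst p) (snd p)" using v by fastforce
    then obtain P where P: "\<And>i. i < n \<Longrightarrow> fst (P i) \<in> F \<and> v i = \<Phi> (fst (P i)) (snd (P i))" by metis
    have "s = (\<Sum>i<n. cscale (c i) (\<Phi> (fst (P i)) (snd (P i))))" unfolding s using P by (intro sum.cong) auto
    then have "(s, \<Sum>i<n. cscale (c i) (\<Theta> (fst (P i)) (snd (P i)))) \<in> G"
      unfolding G_def using P
      by (auto intro!: exI[of _ n] exI[of _ c] exI[of _ "\<lambda>i. fst (P i)"] exI[of _ "\<lambda>i. snd (P i)"])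
    then show ?thesis by blast
  qed
  have dom: "\<exists>b. (a, b) \<in> Gb" for a
  proof -
    have "a \<in> closure (complex_span {\<Phi> x h | x h. x \<in> F})" using nd unfolding nondegenerate_def by simp
    then obtain A where A: "\<forall>n. A n \<in> complex_span {\<Phi> x h | x h. x \<in> F}" "A \<longlonglongrightarrow> a"
      unfolding closure_sequential by blast
    have "\<forall>n. \<exists>b. (A n, b) \<in> G" using A(1) span_G by blast
    then obtain B where B: "\<forall>n. (A n, B n) \<in> G" by metis
    have dd: "dist (B m) (B n) = dist (A m) (A n)" for m n
      unfolding dist_norm by (rule norm_eq_from_inner) (use G1 B in blast)+
    have "Cauchy A" using A(2) by (rule LIMSEQ_imp_Cauchy)
    hence "Cauchy B" unfolding Cauchy_def dd .
    then obtain b where "B \<longlonglongrightarrow> b" using Cauchy_convergent_iff convergent_def by blast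
    then show ?thesis unfolding Gb_def using A(2) B by blast
  qed
  define V where "V a = (SOME b. (a, b) \<in> Gb)" for a
  have V_in: "(a, V a) \<in> Gb" for a unfolding V_def using dom by (rule someI_ex)
  have Vpres: "hinner (V a) (V a') = hinner a a'" for a a' using Gb1 V_in by blast
  have VPhi: "V (\<Phi> x h) = \<Theta> x h" if "x \<in> F" for x h
  proof -
    have "(\<Phi> x h, \<Theta> x h) \<in> G"
      unfolding G_def using that
      by (auto intro!: exI[of _ 1] exI[of _ "\<lambda>_. 1"] exI[of _ "\<lambda>_. x"] exI[of _ "\<lambda>_. h"] simp: cscale_one)
    hence "(\<Phi> x h, \<Theta> x h) \<in> Gb" unfolding Gb_def by (auto intro!: exI[of _ "\<lambda>_. \<Phi> x h"] exI[of _ "\<lambda>_. \<Theta> x h"])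
    then show ?thesis using Guniq V_in by blast
  qed
  have normV: "norm (V a) = norm a" for a
  proof -
    have "(norm (V a))^2 = (norm a)^2" unfolding norm_sq_hinner Vpres ..
    then show ?thesis by (simp add: power2_eq_iff_nonneg)
  qed
  define T where "T x = (\<lambda>h. V (\<Psi> x h))" for x
  have "phi_map ip \<phi> UNIV T"
    unfolding phi_map_def
  proof safe
    fix x
    have cb: "cblin (\<Psi> x)" using pU unfolding phi_map_def by blast
    then obtain C where C: "\<And>h. norm (\<Psi> x h) \<le> C * norm h" unfolding cblin_def by blast
    show "cblin (T x)" unfolding cblin_def T_def
      using cblin_add[OF cb] cblin_cscale[OF cb] pres_add[OF Vpres] pres_scale[OF Vpres] C normV
      by metis
  next
    fix x y
    show "cadj (T x) \<circ> T y = \<phi> (ip x y)"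
    proof
      fix h
      have "cadj (T x) (T y h) = cadj (\<Psi> x) (\<Psi> y h)" unfolding cadj_def T_def Vpres ..
      also have "\<dots> = \<phi> (ip x y) h" using pU unfolding phi_map_def by (metis UNIV_I comp_apply)
      finally show "(cadj (T x) \<circ> T y) h = \<phi> (ip x y) h" by simp
    qed
  qed
  moreover have "\<forall>x\<in>F. T x = \<Theta> x" using ext VPhi unfolding T_def by auto
  ultimately show ?thesis by blast
qed


theorem lemma2p2:
  fixes act :: "'e::cvec \<Rightarrow> 'a::cstar \<Rightarrow> 'e"
    and ip :: "'e \<Rightarrow> 'e \<Rightarrow> 'a"
    and F :: "'e set"
    and \<phi> :: "'a \<Rightarrow> 'h1::chilbert \<Rightarrow> 'h1"
    and \<Phi> \<Psi> :: "'e \<Rightarrow> 'h1 \<Rightarrow> 'h2::chilbert"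
  assumes "hilbert_module act ip"
    and "closed_submodule act ip F"
    and "F \<noteq> {0}"
    and "completely_positive \<phi>"
    and "phi_map ip \<phi> F \<Phi>"
    and "nondegenerate F \<Phi>"
    and "phi_map ip \<phi> UNIV \<Psi>"
    and "\<forall>x\<in>F. \<Psi> x = \<Phi> x"
  shows "(\<forall>z\<in>module_orth ip F. \<forall>x h. \<phi> (ip z x) h = 0) \<and>
         (\<forall>\<Theta> :: 'e \<Rightarrow> 'h1 \<Rightarrow> 'k::chilbert. phi_map ip \<phi> F \<Theta> \<longrightarrow>
            (\<exists>\<Theta>'. phi_map ip \<phi> UNIV \<Theta>' \<and> (\<forall>x\<in>F. \<Theta>' x = \<Theta> x)))"
proof (intro conjI ballI allI impI)
  fix z x h assume "z \<in> module_orth ip F"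
  then show "\<phi> (ip z x) h = 0"
    by (rule part1[OF assms(1) assms(4) assms(5) assms(6) assms(7) assms(8)])
next
  fix \<Theta> :: "'e \<Rightarrow> 'h1 \<Rightarrow> 'k::chilbert"
  assume "phi_map ip \<phi> F \<Theta>"
  then show "\<exists>\<Theta>'. phi_map ip \<phi> UNIV \<Theta>' \<and> (\<forall>x\<in>F. \<Theta>' x = \<Theta> x)"
    by (rule part2[OF assms(5) assms(6) assms(7) assms(8)])
qed

end
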